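(* Let $(G,\boldsymbol{\gamma})$ be a Ross graph. Let $e$ be either an edge $ij$ with $i\neq j$ carrying any color in $\mathbb{Z}/2\mathbb{Z}$, or a self-loop at any vertex $i$ carrying color $1$. Then the colored graph obtained from $(G,\boldsymbol{\gamma})$ by adding $e$ is a reflection-$(2,2)$ graph.
   Context: A colored graph $(G,\boldsymbol{\gamma})$ is a finite directed multigraph $G$ (self-loops and parallel edges allowed) with a color $\gamma_{ij}\in\mathbb{Z}/2\mathbb{Z}$ on each edge. $\rho:H_1(G,\mathbb{Z})\to\mathbb{Z}/2\mathbb{Z}$ sends a cycle to the sum of its edge colors; the $\rho$-image of a subgraph is the image of its cycles, trivial if $\{0\}$. For a subgraph $G'$: $n',m'$ are its numbers of vertices and edges, $c'$ (resp. $c'_0$) the number of its connected components with non-trivial (resp. trivial) $\rho$-image. With $n$ vertices and $m$ edges in $G$: $(G,\boldsymbol{\gamma})$ is a Ross graph if $m=2n-2$ and every subgraph satisfies $m'\le 2n'-2c'-3c'_0$; it is a reflection-$(2,2)$ graph if $m=2n-1$ and every subgraph satisfies $m'\le 2n'-c'-2c'_0$. *)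

theory Defs
  imports "Graph_Theory.Digraph" "HOL-Library.Z2"
begin

text \<open>A colored graph is a finite directed multigraph G (a fin_digraph in the sense
of Graph_Theory, self-loops and parallel arcs allowed) together with a coloring
col :: 'b => bit of its arcs by Z/2Z (type bit).\<close>

inductive uwalk :: "('a,'b) pre_digraph \<Rightarrow> 'b set \<Rightarrow> 'a \<Rightarrow> 'b list \<Rightarrow> 'a \<Rightarrow> bool"
  for G :: "('a,'b) pre_digraph" and F :: "'b set" where
  uwalk_Nil: "uwalk G F u [] u"
| uwalk_fwd: "e \<in> F \<Longrightarrow> tail G e = u \<Longrightarrow> uwalk G F (head G e) es v \<Longrightarrow> uwalk G F u (e # es) v"
| uwalk_bwd: "e \<in> F \<Longrightarrow> head G e = u \<Longrightarrow> uwalk G F (tail G e) es v \<Longrightarrow> uwalk G F u (e # es) v"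

definition sub_verts :: "('a,'b) pre_digraph \<Rightarrow> 'b set \<Rightarrow> 'a set" where
  "sub_verts G F = tail G ` F \<union> head G ` F"

definition sub_comps :: "('a,'b) pre_digraph \<Rightarrow> 'b set \<Rightarrow> 'a set set" where
  "sub_comps G F = (\<lambda>u. {v \<in> sub_verts G F. \<exists>es. uwalk G F u es v}) ` sub_verts G F"

text \<open>A component C of the subgraph spanned by F has non-trivial rho-image iff some
cycle (closed walk) in it has color sum 1; closed walks generate H_1 of the component.\<close>
definition nontrivial_comp :: "('a,'b) pre_digraph \<Rightarrow> ('b \<Rightarrow> bit) \<Rightarrow> 'b set \<Rightarrow> 'a set \<Rightarrow> bool" where
  "nontrivial_comp G col F C \<longleftrightarrow>
     (\<exists>u\<in>C. \<exists>es. uwalk G F u es u \<and> (\<Sum>e\<leftarrow>es. col e) = 1)"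

definition c_nontriv :: "('a,'b) pre_digraph \<Rightarrow> ('b \<Rightarrow> bit) \<Rightarrow> 'b set \<Rightarrow> nat" where
  "c_nontriv G col F = card {C \<in> sub_comps G F. nontrivial_comp G col F C}"

definition c_triv :: "('a,'b) pre_digraph \<Rightarrow> ('b \<Rightarrow> bit) \<Rightarrow> 'b set \<Rightarrow> nat" where
  "c_triv G col F = card {C \<in> sub_comps G F. \<not> nontrivial_comp G col F C}"

definition ross_graph :: "('a,'b) pre_digraph \<Rightarrow> ('b \<Rightarrow> bit) \<Rightarrow> bool" where
  "ross_graph G col \<longleftrightarrow> fin_digraph G \<and>
     int (card (arcs G)) = 2 * int (card (verts G)) - 2 \<and>
     (\<forall>F \<subseteq> arcs G. int (card F) \<le> 2 * int (card (sub_verts G F))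
         - 2 * int (c_nontriv G col F) - 3 * int (c_triv G col F))"

definition reflection_22_graph :: "('a,'b) pre_digraph \<Rightarrow> ('b \<Rightarrow> bit) \<Rightarrow> bool" where
  "reflection_22_graph G col \<longleftrightarrow> fin_digraph G \<and>
     int (card (arcs G)) = 2 * int (card (verts G)) - 1 \<and>
     (\<forall>F \<subseteq> arcs G. int (card F) \<le> 2 * int (card (sub_verts G F))
         - int (c_nontriv G col F) - 2 * int (c_triv G col F))"

end

theory Submission imports Defs begin

lemma uwalk_mono: "uwalk G F u es v \<Longrightarrow> F \<subseteq> F' \<Longrightarrow> uwalk G F' u es v"
  by (induction rule: uwalk.induct) (auto intro: uwalk.intros)

lemma uwalk_append: "uwalk G F u es v \<Longrightarrow> uwalk G F v fs w \<Longrightarrow> uwalk G F u (es@fs) w"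
  by (induction rule: uwalk.induct) (auto intro: uwalk.intros)

lemma uwalk_rev: "uwalk G F u es v \<Longrightarrow> uwalk G F v (rev es) u"
proof (induction rule: uwalk.induct)
  case (uwalk_Nil u) then show ?case by (auto intro: uwalk.intros)
next
  case (uwalk_fwd e u es v)
  have "uwalk G F (head G e) [e] u" using uwalk_fwd by (auto intro: uwalk.intros)
  then show ?case using uwalk_fwd uwalk_append by fastforce
next
  case (uwalk_bwd e u es v)
  have "uwalk G F (tail G e) [e] u" using uwalk_bwd by (auto intro: uwalk.intros)
  then show ?case using uwalk_bwd uwalk_append by fastforce
qed

lemma uwalk_end: "uwalk G F u es v \<Longrightarrow> v = u \<or> v \<in> sub_verts G F"
  by (induction rule: uwalk.induct) (auto simp: sub_verts_def)

lemma uwalk_start: "uwalk G F u es v \<Longrightarrow> u = v \<or> u \<in> sub_verts G F"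
  by (induction rule: uwalk.induct) (auto simp: sub_verts_def)

lemma uwalk_restrict:
  "uwalk G F u es v \<Longrightarrow> u \<notin> sub_verts G B \<Longrightarrow> F \<subseteq> A \<union> B
   \<Longrightarrow> sub_verts G A \<inter> sub_verts G B = {} \<Longrightarrow> uwalk G A u es v"
proof (induction rule: uwalk.induct)
  case (uwalk_Nil u) then show ?case by (auto intro: uwalk.intros)
next
  case (uwalk_fwd e u es v)
  have "e \<notin> B" using uwalk_fwd by (auto simp: sub_verts_def)
  then have eA: "e \<in> A" using uwalk_fwd by auto
  then have "head G e \<in> sub_verts G A" by (auto simp: sub_verts_def)
  then have "head G e \<notin> sub_verts G B" using uwalk_fwd by auto
  then show ?case using uwalk_fwd eA by (auto intro: uwalk.intros)
next
  case (uwalk_bwd e u es v)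
  have "e \<notin> B" using uwalk_bwd by (auto simp: sub_verts_def)
  then have eA: "e \<in> A" using uwalk_bwd by auto
  then have "tail G e \<in> sub_verts G A" by (auto simp: sub_verts_def)
  then have "tail G e \<notin> sub_verts G B" using uwalk_bwd by auto
  then show ?case using uwalk_bwd eA by (auto intro: uwalk.intros)
qed

lemma sub_verts_mono: "A \<subseteq> F \<Longrightarrow> sub_verts G A \<subseteq> sub_verts G F"
  by (auto simp: sub_verts_def)

lemma finite_sub_verts: "finite F \<Longrightarrow> finite (sub_verts G F)"
  by (auto simp: sub_verts_def)

lemma finite_sub_comps: "finite F \<Longrightarrow> finite (sub_comps G F)"
  by (auto simp: sub_comps_def finite_sub_verts)

lemma sub_comps_sub: "C \<in> sub_comps G F \<Longrightarrow> C \<subseteq> sub_verts G F"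
  by (auto simp: sub_comps_def)

lemma class_eq:
  assumes "u \<in> sub_verts G A" "A \<subseteq> F" "F \<subseteq> A \<union> B" "sub_verts G A \<inter> sub_verts G B = {}"
  shows "{v \<in> sub_verts G F. \<exists>es. uwalk G F u es v} = {v \<in> sub_verts G A. \<exists>es. uwalk G A u es v}"
proof -
  have u: "u \<notin> sub_verts G B" using assms by auto
  show ?thesis
  proof (intro set_eqI iffI)
    fix v assume "v \<in> {v \<in> sub_verts G F. \<exists>es. uwalk G F u es v}"
    then obtain es where "uwalk G F u es v" by auto
    then have w: "uwalk G A u es v" using uwalk_restrict[OF _ u assms(3,4)] by blast
    then have "v \<in> sub_verts G A" using uwalk_end[OF w] assms(1) by auto
    then show "v \<in> {v \<in> sub_verts G A. \<exists>es. uwalk G A u es v}" using w by auto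
  next
    fix v assume "v \<in> {v \<in> sub_verts G A. \<exists>es. uwalk G A u es v}"
    then obtain es where v: "v \<in> sub_verts G A" and w: "uwalk G A u es v" by auto
    have "uwalk G F u es v" using uwalk_mono[OF w assms(2)] .
    moreover have "v \<in> sub_verts G F" by (rule subsetD[OF sub_verts_mono[OF assms(2)] v])
    ultimately show "v \<in> {v \<in> sub_verts G F. \<exists>es. uwalk G F u es v}" by blast
  qed
qed

lemma nontriv_eq:
  assumes "C \<subseteq> sub_verts G A" "A \<subseteq> F" "F \<subseteq> A \<union> B" "sub_verts G A \<inter> sub_verts G B = {}"
  shows "nontrivial_comp G col F C = nontrivial_comp G col A C"
proof
  assume "nontrivial_comp G col F C"
  then obtain u es where "u \<in> C" "uwalk G F u es u" "(\<Sum>e\<leftarrow>es. col e) = 1"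
    unfolding nontrivial_comp_def by auto
  moreover have "u \<notin> sub_verts G B" using \<open>u \<in> C\<close> assms by auto
  ultimately show "nontrivial_comp G col A C" unfolding nontrivial_comp_def
    using uwalk_restrict assms by metis
next
  assume "nontrivial_comp G col A C"
  then show "nontrivial_comp G col F C" unfolding nontrivial_comp_def
    using uwalk_mono assms(2) by metis
qed

lemma comp_part:
  assumes "C \<in> sub_comps G F" "A \<subseteq> F" "B \<subseteq> F" "F \<subseteq> A \<union> B"
    "sub_verts G A \<inter> sub_verts G B = {}"
  shows "(C \<in> sub_comps G A \<and> (nontrivial_comp G col F C = nontrivial_comp G col A C)) \<or>
         (C \<in> sub_comps G B \<and> (nontrivial_comp G col F C = nontrivial_comp G col B C))"
proof -
  obtain u where u: "u \<in> sub_verts G F" and C: "C = {v \<in> sub_verts G F. \<exists>es. uwalk G F u es v}"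
    using assms(1) unfolding sub_comps_def by auto
  have "sub_verts G F \<subseteq> sub_verts G A \<union> sub_verts G B" using assms(4) by (auto simp: sub_verts_def)
  then consider "u \<in> sub_verts G A" | "u \<in> sub_verts G B" using u by auto
  then show ?thesis
  proof cases
    case 1
    have CA: "C = {v \<in> sub_verts G A. \<exists>es. uwalk G A u es v}" using class_eq[OF 1 assms(2,4,5)] C by simp
    then have "C \<in> sub_comps G A" using 1 unfolding sub_comps_def by auto
    moreover have "C \<subseteq> sub_verts G A" using CA by auto
    ultimately show ?thesis using nontriv_eq[OF _ assms(2,4,5)] by blast
  next
    case 2
    have d: "sub_verts G B \<inter> sub_verts G A = {}" using assms(5) by auto
    have f: "F \<subseteq> B \<union> A" using assms(4) by auto
    have CA: "C = {v \<in> sub_verts G B. \<exists>es. uwalk G B u es v}" using class_eq[OF 2 assms(3) f d] C by simp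
    then have "C \<in> sub_comps G B" using 2 unfolding sub_comps_def by auto
    moreover have "C \<subseteq> sub_verts G B" using CA by auto
    ultimately show ?thesis using nontriv_eq[OF _ assms(3) f d] by blast
  qed
qed

lemma split_bounds:
  assumes "finite F" "A \<subseteq> F" "B \<subseteq> F" "F \<subseteq> A \<union> B"
    "sub_verts G A \<inter> sub_verts G B = {}"
  shows "c_nontriv G col F \<le> c_nontriv G col A + c_nontriv G col B"
    and "c_triv G col F \<le> c_triv G col A + c_triv G col B"
proof -
  have fA: "finite (sub_comps G A)" "finite (sub_comps G B)"
    using assms finite_sub_comps finite_subset by metis+
  have "{C \<in> sub_comps G F. nontrivial_comp G col F C} \<subseteq>
        {C \<in> sub_comps G A. nontrivial_comp G col A C} \<union> {C \<in> sub_comps G B. nontrivial_comp G col B C}"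
    using comp_part[OF _ assms(2-5), of _ col] by blast
  then have "c_nontriv G col F \<le> card ({C \<in> sub_comps G A. nontrivial_comp G col A C} \<union> {C \<in> sub_comps G B. nontrivial_comp G col B C})"
    unfolding c_nontriv_def by (intro card_mono) (use fA in auto)
  also have "\<dots> \<le> c_nontriv G col A + c_nontriv G col B" unfolding c_nontriv_def by (rule card_Un_le)
  finally show "c_nontriv G col F \<le> c_nontriv G col A + c_nontriv G col B" .
  have "{C \<in> sub_comps G F. \<not> nontrivial_comp G col F C} \<subseteq>
        {C \<in> sub_comps G A. \<not> nontrivial_comp G col A C} \<union> {C \<in> sub_comps G B. \<not> nontrivial_comp G col B C}"
    using comp_part[OF _ assms(2-5), of _ col] by blast
  then have "c_triv G col F \<le> card ({C \<in> sub_comps G A. \<not> nontrivial_comp G col A C} \<union> {C \<in> sub_comps G B. \<not> nontrivial_comp G col B C})"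
    unfolding c_triv_def by (intro card_mono) (use fA in auto)
  also have "\<dots> \<le> c_triv G col A + c_triv G col B" unfolding c_triv_def by (rule card_Un_le)
  finally show "c_triv G col F \<le> c_triv G col A + c_triv G col B" .
qed


lemma connected_comps:
  assumes "r \<in> sub_verts G A" "\<forall>v \<in> sub_verts G A. \<exists>es. uwalk G A r es v"
  shows "sub_comps G A = {sub_verts G A}"
proof -
  have cl: "{v \<in> sub_verts G A. \<exists>es. uwalk G A u es v} = sub_verts G A" if u: "u \<in> sub_verts G A" for u
  proof -
    obtain es1 where w1: "uwalk G A r es1 u" using assms(2) u by blast
    have "\<exists>es. uwalk G A u es v" if v: "v \<in> sub_verts G A" for v
    proof -
      obtain es2 where w2: "uwalk G A r es2 v" using assms(2) v by blast
      have "uwalk G A u (rev es1 @ es2) v" by (rule uwalk_append[OF uwalk_rev[OF w1] w2])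
      then show ?thesis by (rule exI)
    qed
    then show ?thesis by auto
  qed
  show ?thesis unfolding sub_comps_def
  proof (intro set_eqI iffI)
    fix C assume "C \<in> (\<lambda>u. {v \<in> sub_verts G A. \<exists>es. uwalk G A u es v}) ` sub_verts G A"
    then obtain u where "u \<in> sub_verts G A" "C = {v \<in> sub_verts G A. \<exists>es. uwalk G A u es v}" by (rule imageE)
    then show "C \<in> {sub_verts G A}" using cl by simp
  next
    fix C assume "C \<in> {sub_verts G A}"
    then have "C = {v \<in> sub_verts G A. \<exists>es. uwalk G A r es v}" using cl[OF assms(1)] by simp
    then show "C \<in> (\<lambda>u. {v \<in> sub_verts G A. \<exists>es. uwalk G A u es v}) ` sub_verts G A"
      using assms(1) by (rule image_eqI)
  qed
qed

lemma comp_split: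
  assumes "finite F" "e \<in> F"
  obtains A B where "A \<subseteq> F" "B \<subseteq> F" "F = A \<union> B" "A \<inter> B = {}" "e \<in> A"
    "sub_verts G A \<inter> sub_verts G B = {}" "sub_comps G A = {sub_verts G A}"
proof -
  define R where "R = {v. \<exists>es. uwalk G F (tail G e) es v}"
  define A where "A = {f \<in> F. tail G f \<in> R}"
  define B where "B = F - A"
  have step: "tail G f \<in> R \<longleftrightarrow> head G f \<in> R" if f: "f \<in> F" for f
  proof
    assume "tail G f \<in> R"
    then obtain es where w: "uwalk G F (tail G e) es (tail G f)" unfolding R_def by blast
    have "uwalk G F (tail G f) [f] (head G f)" using f by (auto intro: uwalk.intros)
    then show "head G f \<in> R" unfolding R_def using uwalk_append[OF w] by blast
  next
    assume "head G f \<in> R"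
    then obtain es where w: "uwalk G F (tail G e) es (head G f)" unfolding R_def by blast
    have "uwalk G F (head G f) [f] (tail G f)" using f by (auto intro: uwalk.intros)
    then show "tail G f \<in> R" unfolding R_def using uwalk_append[OF w] by blast
  qed
  have r: "tail G e \<in> R" unfolding R_def by (auto intro: uwalk.intros)
  have eA: "e \<in> A" using r assms(2) unfolding A_def by auto
  have svA: "sub_verts G A \<subseteq> R" unfolding sub_verts_def A_def using step by auto
  have svB: "sub_verts G B \<inter> R = {}" unfolding sub_verts_def A_def B_def using step by auto
  have disj: "sub_verts G A \<inter> sub_verts G B = {}" using svA svB by blast
  have rB: "tail G e \<notin> sub_verts G B" using svB r by blast
  have FAB: "F \<subseteq> A \<union> B" unfolding B_def by blast
  have "\<forall>v \<in> sub_verts G A. \<exists>es. uwalk G A (tail G e) es v"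
  proof
    fix v assume "v \<in> sub_verts G A"
    then have "v \<in> R" using svA by blast
    then obtain es where "uwalk G F (tail G e) es v" unfolding R_def by blast
    then have "uwalk G A (tail G e) es v" using uwalk_restrict[OF _ rB FAB disj] by blast
    then show "\<exists>es. uwalk G A (tail G e) es v" by blast
  qed
  moreover have "tail G e \<in> sub_verts G A" using eA unfolding sub_verts_def by blast
  ultimately have "sub_comps G A = {sub_verts G A}" using connected_comps by metis
  moreover have "A \<subseteq> F" "B \<subseteq> F" "F = A \<union> B" "A \<inter> B = {}" unfolding A_def B_def by auto
  ultimately show ?thesis using that eA disj by blast
qed

lemma card_comps_ge:
  assumes "finite F" "F \<noteq> {}"
  shows "1 \<le> c_nontriv G col F + c_triv G col F"
proof -
  obtain f where "f \<in> F" using assms by blast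
  then have "tail G f \<in> sub_verts G F" unfolding sub_verts_def by blast
  then have ne: "sub_comps G F \<noteq> {}" unfolding sub_comps_def by blast
  have fin: "finite (sub_comps G F)" using finite_sub_comps[OF assms(1)] .
  have "1 \<le> card (sub_comps G F)" using ne fin by (simp add: Suc_le_eq card_gt_0_iff)
  also have "\<dots> \<le> card ({C \<in> sub_comps G F. nontrivial_comp G col F C} \<union> {C \<in> sub_comps G F. \<not> nontrivial_comp G col F C})"
    by (intro card_mono) (use fin in auto)
  also have "\<dots> \<le> c_nontriv G col F + c_triv G col F" unfolding c_nontriv_def c_triv_def by (rule card_Un_le)
  finally show ?thesis .
qed

lemma comp_bound:
  assumes fin: "finite A" and eA: "e \<in> A" and A0: "A - {e} \<subseteq> arcs G"
    and ross: "\<forall>F \<subseteq> arcs G. int (card F) \<le> 2 * int (card (sub_verts G F))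
         - 2 * int (c_nontriv G col F) - 3 * int (c_triv G col F)"
    and conn: "sub_comps G A = {sub_verts G A}"
    and lp: "tail G e \<noteq> head G e \<or> col e = 1"
  shows "int (card A) \<le> 2 * int (card (sub_verts G A)) - int (c_nontriv G col A) - 2 * int (c_triv G col A)"
proof -
  define S where "S = sub_verts G A"
  define A0 where "A0 = A - {e}"
  have cA: "card A = card A0 + 1" unfolding A0_def using fin eA
    using card_Suc_Diff1[OF fin eA] by simp
  have finA0: "finite A0" using fin unfolding A0_def by blast
  have n0: "card (sub_verts G A0) \<le> card S" unfolding S_def A0_def
    by (intro card_mono finite_sub_verts fin sub_verts_mono) auto
  have tS: "tail G e \<in> S" "head G e \<in> S" using eA unfolding S_def sub_verts_def by auto
  have finS: "finite S" unfolding S_def using finite_sub_verts[OF fin] .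
  have n1: "1 \<le> card S" using tS finS by (simp add: Suc_le_eq card_gt_0_iff) blast
  have n2: "2 \<le> card S" if "tail G e \<noteq> head G e"
  proof -
    have "{tail G e, head G e} \<subseteq> S" using tS by blast
    then have "card {tail G e, head G e} \<le> card S" using finS by (rule card_mono[rotated])
    then show ?thesis using that by simp
  qed
  have R0: "int (card A0) \<le> 2 * int (card (sub_verts G A0))
         - 2 * int (c_nontriv G col A0) - 3 * int (c_triv G col A0)"
    using ross A0 unfolding A0_def by blast
  have ge: "1 \<le> c_nontriv G col A0 + c_triv G col A0" if "A0 \<noteq> {}"
    using card_comps_ge[OF finA0 that] .
  show ?thesis
  proof (cases "nontrivial_comp G col A S")
    case True
    have s1: "{C \<in> {S}. nontrivial_comp G col A C} = {S}" "{C \<in> {S}. \<not> nontrivial_comp G col A C} = {}"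
      using True by auto
    have "c_nontriv G col A = 1" "c_triv G col A = 0"
      unfolding c_nontriv_def c_triv_def conn S_def[symmetric] s1 by simp_all
    then show ?thesis using cA n0 n1 R0 ge unfolding S_def[symmetric]
      by (cases "A0 = {}") auto
  next
    case False
    have s1: "{C \<in> {S}. nontrivial_comp G col A C} = {}" "{C \<in> {S}. \<not> nontrivial_comp G col A C} = {S}"
      using False by auto
    have ct: "c_nontriv G col A = 0" "c_triv G col A = 1"
      unfolding c_nontriv_def c_triv_def conn S_def[symmetric] s1 by simp_all
    have ne: "tail G e \<noteq> head G e"
    proof
      assume eq: "tail G e = head G e"
      then have c1: "col e = 1" using lp by blast
      have "uwalk G A (tail G e) [e] (tail G e)" using eA eq by (auto intro: uwalk.intros)
      then have "nontrivial_comp G col A S" unfolding nontrivial_comp_def using tS c1 by fastforce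
      then show False using False by blast
    qed
    have a0: "c_nontriv G col A0 = 0"
    proof -
      have e0: "{C \<in> sub_comps G A0. nontrivial_comp G col A0 C} = {}"
      proof (rule ccontr)
        assume "{C \<in> sub_comps G A0. nontrivial_comp G col A0 C} \<noteq> {}"
        then obtain C where C: "C \<in> sub_comps G A0" "nontrivial_comp G col A0 C" by blast
        then obtain u es where u: "u \<in> C" "uwalk G A0 u es u" "(\<Sum>e\<leftarrow>es. col e) = 1"
          unfolding nontrivial_comp_def by blast
        have "u \<in> S" using sub_comps_sub[OF C(1)] u(1) sub_verts_mono[of A0 A G] unfolding S_def A0_def by blast
        moreover have "uwalk G A u es u" using uwalk_mono[OF u(2)] unfolding A0_def by blast
        ultimately have "nontrivial_comp G col A S" unfolding nontrivial_comp_def using u(3) by blast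
        then show False using False by blast
      qed
      show ?thesis unfolding c_nontriv_def e0 by (rule card.empty)
    qed
    show ?thesis using cA n0 n2[OF ne] R0 ge a0 ct unfolding S_def[symmetric]
      by (cases "A0 = {}") auto
  qed
qed

lemma uwalk_cong:
  assumes "tail G = tail G'" "head G = head G'"
  shows "uwalk G F u es v \<Longrightarrow> uwalk G' F u es v"
  by (induction rule: uwalk.induct) (auto intro: uwalk.intros simp: assms)

lemma uwalk_eq:
  assumes "tail G = tail G'" "head G = head G'"
  shows "uwalk G = uwalk G'"
  using uwalk_cong[OF assms] uwalk_cong[OF assms[symmetric]] by (intro ext) blast

theorem proposition2:
  fixes G :: "('a,'b) pre_digraph" and col :: "'b \<Rightarrow> bit" and e :: 'b
  assumes "ross_graph G col"
    and "e \<notin> arcs G"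
    and "tail G e \<in> verts G" and "head G e \<in> verts G"
    and "tail G e \<noteq> head G e \<or> col e = 1"
  shows "reflection_22_graph (pre_digraph.add_arc G e) col"
proof -
  define H where "H = pre_digraph.add_arc G e"
  have fg: "fin_digraph G" and cardG: "int (card (arcs G)) = 2 * int (card (verts G)) - 2"
    and ross: "\<forall>F \<subseteq> arcs G. int (card F) \<le> 2 * int (card (sub_verts G F))
         - 2 * int (c_nontriv G col F) - 3 * int (c_triv G col F)"
    using assms(1) unfolding ross_graph_def by blast+
  interpret fin_digraph G by (rule fg)
  have tH: "tail H = tail G" and hH: "head H = head G" and aH: "arcs H = insert e (arcs G)"
    and vH: "verts H = verts G"
    unfolding H_def using assms(3,4) by (simp_all add: verts_add_arc)
  have uw: "uwalk H = uwalk G" by (rule uwalk_eq[OF tH hH])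
  have svH: "sub_verts H F = sub_verts G F" for F unfolding sub_verts_def tH hH ..
  have scH: "sub_comps H F = sub_comps G F" for F unfolding sub_comps_def svH uw ..
  have ntH: "nontrivial_comp H col F C = nontrivial_comp G col F C" for F C
    unfolding nontrivial_comp_def uw ..
  have cnH: "c_nontriv H col F = c_nontriv G col F" for F unfolding c_nontriv_def scH ntH ..
  have ctH: "c_triv H col F = c_triv G col F" for F unfolding c_triv_def scH ntH ..
  have finH: "fin_digraph H"
    unfolding fin_digraph_def fin_digraph_axioms_def wf_digraph_def
    using aH vH tH hH assms(3,4) by auto
  have cardH: "int (card (arcs H)) = 2 * int (card (verts H)) - 1"
    using cardG assms(2) unfolding aH vH by simp
  have main: "int (card F) \<le> 2 * int (card (sub_verts G F)) - int (c_nontriv G col F) - 2 * int (c_triv G col F)"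
    if F: "F \<subseteq> insert e (arcs G)" for F
  proof (cases "e \<in> F")
    case False
    then have "F \<subseteq> arcs G" using F by blast
    then have "int (card F) \<le> 2 * int (card (sub_verts G F))
         - 2 * int (c_nontriv G col F) - 3 * int (c_triv G col F)" using ross by blast
    then show ?thesis by linarith
  next
    case True
    have finF: "finite F" using finite_subset[OF F] finite_arcs by simp
    obtain A B where AB: "A \<subseteq> F" "B \<subseteq> F" "F = A \<union> B" "A \<inter> B = {}" "e \<in> A"
      "sub_verts G A \<inter> sub_verts G B = {}" "sub_comps G A = {sub_verts G A}"
      by (rule comp_split[OF finF True])
    have finA: "finite A" "finite B" using finite_subset[OF AB(1) finF] finite_subset[OF AB(2) finF] .
    have cF: "card F = card A + card B" unfolding AB(3) by (rule card_Un_disjoint[OF finA AB(4)])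
    have svU: "sub_verts G F = sub_verts G A \<union> sub_verts G B" unfolding AB(3) sub_verts_def image_Un by blast
    have nF: "card (sub_verts G F) = card (sub_verts G A) + card (sub_verts G B)"
      unfolding svU by (rule card_Un_disjoint[OF finite_sub_verts[OF finA(1)] finite_sub_verts[OF finA(2)] AB(6)])
    have sb: "c_nontriv G col F \<le> c_nontriv G col A + c_nontriv G col B"
       "c_triv G col F \<le> c_triv G col A + c_triv G col B"
      using split_bounds[OF finF AB(1,2) _ AB(6)] AB(3) by simp_all
    have eB: "e \<notin> B" using AB(4,5) by auto
    have Bsub: "B \<subseteq> arcs G" using AB(2) eB F by auto
    have RB: "int (card B) \<le> 2 * int (card (sub_verts G B))
         - 2 * int (c_nontriv G col B) - 3 * int (c_triv G col B)" using ross Bsub by simp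
    have A0: "A - {e} \<subseteq> arcs G" using AB(1) F by auto
    have RA: "int (card A) \<le> 2 * int (card (sub_verts G A)) - int (c_nontriv G col A) - 2 * int (c_triv G col A)"
      by (rule comp_bound[OF finA(1) AB(5) A0 ross AB(7) assms(5)])
    show ?thesis using cF nF sb RA RB by linarith
  qed
  have "\<forall>F \<subseteq> arcs H. int (card F) \<le> 2 * int (card (sub_verts H F))
         - int (c_nontriv H col F) - 2 * int (c_triv H col F)"
    unfolding aH svH cnH ctH using main by blast
  then show ?thesis unfolding reflection_22_graph_def H_def[symmetric]
    using finH cardH by blast
qed

end
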